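(* Let $D=\{(x_n,y_n)\}_{n=0}^N$ with $x_0<x_1<\dots<x_N$, $I=[x_0,x_N]$, and $\mathcal{J}_D:=\{f\in\mathcal{C}(I): f(x_n)=y_n,\ n=0,\dots,N\}$. For $n=1,\dots,N$ let $L_n$ be the affine map with $L_n(x_0)=x_{n-1}$, $L_n(x_N)=x_n$, and let $\alpha_n,q_n\in\mathcal{C}(I)$ satisfy $\Lambda:=\max_n\|\alpha_n\|_\infty<1$ and the join-up conditions $\alpha_n(x_0)y_0+q_n(x_0)=y_{n-1}$, $\alpha_n(x_N)y_N+q_n(x_N)=y_n$. Define $\widehat{T}:\mathcal{J}_D\to\mathcal{J}_D$ by $\widehat{T}f(x):=\alpha_n(L_n^{-1}(x))\,f(L_n^{-1}(x))+q_n(L_n^{-1}(x))$ for $x\in[x_{n-1},x_n]$, $n=1,\dots,N$. Then $\widehat{T}$ can be extended to a continuous operator $\overline{T}:\mathcal{C}(I)\to\mathcal{J}_D$ (i.e. $\overline{T}|_{\mathcal{J}_D}=\widehat{T}$).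
   Context: $\mathcal{C}(I)$ denotes the Banach space of continuous real functions on $I$ with the supremum norm, and $\mathcal{J}_D$ carries the induced metric. *)

theory Defs
  imports "HOL-Analysis.Analysis"
begin

definition intI :: "(nat \<Rightarrow> real) \<Rightarrow> nat \<Rightarrow> real set" where
  "intI x N = {x 0 .. x N}"

text \<open>Elements of C(I) are represented by real functions continuous on I
  (values outside I are irrelevant).\<close>
definition CI :: "real set \<Rightarrow> (real \<Rightarrow> real) set" where
  "CI I = {f. continuous_on I f}"

definition supnorm :: "real set \<Rightarrow> (real \<Rightarrow> real) \<Rightarrow> real" where
  "supnorm I f = (SUP t\<in>I. \<bar>f t\<bar>)"

definition supdist :: "real set \<Rightarrow> (real \<Rightarrow> real) \<Rightarrow> (real \<Rightarrow> real) \<Rightarrow> real" where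
  "supdist I f g = supnorm I (\<lambda>t. f t - g t)"

definition JD :: "(nat \<Rightarrow> real) \<Rightarrow> (nat \<Rightarrow> real) \<Rightarrow> nat \<Rightarrow> (real \<Rightarrow> real) set" where
  "JD x y N = {f \<in> CI (intI x N). \<forall>n\<le>N. f (x n) = y n}"

definition Lmap :: "(nat \<Rightarrow> real) \<Rightarrow> nat \<Rightarrow> nat \<Rightarrow> real \<Rightarrow> real" where
  "Lmap x N n t = x (n - 1) + (t - x 0) * (x n - x (n - 1)) / (x N - x 0)"

definition Linv :: "(nat \<Rightarrow> real) \<Rightarrow> nat \<Rightarrow> nat \<Rightarrow> real \<Rightarrow> real" where
  "Linv x N n s = x 0 + (s - x (n - 1)) * (x N - x 0) / (x n - x (n - 1))"

definition op_continuous :: "real set \<Rightarrow> ((real \<Rightarrow> real) \<Rightarrow> (real \<Rightarrow> real)) \<Rightarrow> bool" where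
  "op_continuous I T = (\<forall>f\<in>CI I. \<forall>e>0. \<exists>d>0. \<forall>g\<in>CI I.
      supdist I f g < d \<longrightarrow> supdist I (T f) (T g) < e)"

end

theory Submission
  imports Defs
begin

lemma supnorm_upper:
  assumes "continuous_on {a..b::real} h" "t \<in> {a..b}"
  shows "\<bar>h t\<bar> \<le> supnorm {a..b} h"
proof -
  have "compact (h ` {a..b})" using assms(1) compact_continuous_image by blast
  then have "bounded (h ` {a..b})" by (rule compact_imp_bounded)
  then obtain B where B: "\<forall>s\<in>{a..b}. \<bar>h s\<bar> \<le> B"
    unfolding bounded_iff by auto
  have "bdd_above ((\<lambda>s. \<bar>h s\<bar>) ` {a..b})" using B by (auto intro: bdd_aboveI2)
  then show ?thesis unfolding supnorm_def using assms(2) by (rule cSUP_upper[rotated])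
qed

lemma supnorm_least:
  assumes "I \<noteq> {}" "\<And>t. t \<in> I \<Longrightarrow> \<bar>h t\<bar> \<le> B"
  shows "supnorm I h \<le> B"
  unfolding supnorm_def using assms by (rule cSUP_least)

lemma mono_x:
  assumes incr: "\<And>n. n < N \<Longrightarrow> x n < x (Suc n)"
  shows "i < j \<Longrightarrow> j \<le> N \<Longrightarrow> (x i :: real) < x j"
proof (induction j)
  case 0 then show ?case by simp
next
  case (Suc j)
  then show ?case
    using incr[of j] by (cases "i = j") (auto simp: less_Suc_eq)
qed

lemma cover:
  assumes incr: "\<And>n. n < N \<Longrightarrow> x n < x (Suc n)"
  shows "1 \<le> m \<Longrightarrow> m \<le> N \<Longrightarrow> s \<in> {x 0 .. (x m :: real)} \<Longrightarrow> \<exists>n\<in>{1..m}. s \<in> {x (n - 1) .. x n}"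
proof (induction m)
  case 0 then show ?case by simp
next
  case (Suc m)
  show ?case
  proof (cases "m = 0")
    case True then show ?thesis using Suc.prems by auto
  next
    case False
    show ?thesis
    proof (cases "s \<le> x m")
      case True
      then have "\<exists>n\<in>{1..m}. s \<in> {x (n - 1) .. x n}" using Suc False by auto
      then show ?thesis by auto
    next
      case False
      then show ?thesis using Suc.prems by (intro bexI[of _ "Suc m"]) auto
    qed
  qed
qed

theorem theorem4p3:
  fixes N :: nat and x y :: "nat \<Rightarrow> real"
    and \<alpha> q :: "nat \<Rightarrow> real \<Rightarrow> real"
  assumes N_pos: "0 < N"
    and incr: "\<And>n. n < N \<Longrightarrow> x n < x (Suc n)"
    and cont_\<alpha>: "\<And>n. n \<in> {1..N} \<Longrightarrow> \<alpha> n \<in> CI (intI x N)"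
    and cont_q: "\<And>n. n \<in> {1..N} \<Longrightarrow> q n \<in> CI (intI x N)"
    and Lambda: "Max ((\<lambda>n. supnorm (intI x N) (\<alpha> n)) ` {1..N}) < 1"
    and join0: "\<And>n. n \<in> {1..N} \<Longrightarrow> \<alpha> n (x 0) * y 0 + q n (x 0) = y (n - 1)"
    and joinN: "\<And>n. n \<in> {1..N} \<Longrightarrow> \<alpha> n (x N) * y N + q n (x N) = y n"
  shows "\<exists>Tbar :: (real \<Rightarrow> real) \<Rightarrow> (real \<Rightarrow> real).
           (\<forall>f\<in>CI (intI x N). Tbar f \<in> JD x y N)
         \<and> op_continuous (intI x N) Tbar
         \<and> (\<forall>f\<in>JD x y N. \<forall>n\<in>{1..N}. \<forall>s\<in>{x (n - 1) .. x n}.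
              Tbar f s = \<alpha> n (Linv x N n s) * f (Linv x N n s) + q n (Linv x N n s))"
proof -
  define I where "I = {x 0 .. x N}"
  have I_def': "intI x N = I" unfolding I_def intI_def by simp
  have mono: "\<And>i j. i < j \<Longrightarrow> j \<le> N \<Longrightarrow> x i < x j" using mono_x[of N x, OF incr] by blast
  have x0N: "x 0 < x N" using mono N_pos by blast
  have xin: "\<And>i. i \<le> N \<Longrightarrow> x i \<in> I"
    unfolding I_def using mono by (metis atLeastAtMost_iff le_less nat_less_le zero_le)
  have piece_lt: "\<And>n. n \<in> {1..N} \<Longrightarrow> x (n - 1) < x n"
  proof -
    fix n :: nat assume n: "n \<in> {1..N}"
    then have "n - 1 < N" "Suc (n - 1) = n" by auto
    then show "x (n - 1) < x n" using incr[of "n - 1"] by simp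
  qed
  have Linv_in: "\<And>n s. n \<in> {1..N} \<Longrightarrow> s \<in> {x (n - 1) .. x n} \<Longrightarrow> Linv x N n s \<in> I"
  proof -
    fix n s assume n: "n \<in> {1..N}" and s: "s \<in> {x (n - 1) .. x n}"
    have ab: "x (n - 1) < x n" using piece_lt n by blast
    have "0 \<le> (s - x (n - 1)) * (x N - x 0) / (x n - x (n - 1))"
      using s ab x0N by (intro divide_nonneg_nonneg mult_nonneg_nonneg) auto
    moreover have "(s - x (n - 1)) * (x N - x 0) / (x n - x (n - 1)) \<le> x N - x 0"
    proof -
      have "(s - x (n - 1)) * (x N - x 0) \<le> (x n - x (n - 1)) * (x N - x 0)"
        using s x0N by (intro mult_right_mono) auto
      then show ?thesis using ab by (simp add: divide_le_eq mult.commute)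
    qed
    ultimately show "Linv x N n s \<in> I" unfolding Linv_def I_def by auto
  qed
  have Linv_lo: "\<And>n. n \<in> {1..N} \<Longrightarrow> Linv x N n (x (n - 1)) = x 0"
    unfolding Linv_def by simp
  have Linv_hi: "\<And>n. n \<in> {1..N} \<Longrightarrow> Linv x N n (x n) = x N"
    unfolding Linv_def using piece_lt by force
  have cont_Linv: "\<And>n. continuous_on UNIV (Linv x N n)"
  proof -
    fix n
    have e: "Linv x N n = (\<lambda>s. x 0 + (s - x (n - 1)) * ((x N - x 0) / (x n - x (n - 1))))"
      unfolding Linv_def by (simp add: fun_eq_iff)
    have "continuous_on UNIV (\<lambda>s. x 0 + (s - x (n - 1)) * ((x N - x 0) / (x n - x (n - 1))))"
      by (intro continuous_intros)
    then show "continuous_on UNIV (Linv x N n)" unfolding e .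
  qed
  define H where "H g n s = \<alpha> n (Linv x N n s) * g (Linv x N n s) + q n (Linv x N n s)"
    for g :: "real \<Rightarrow> real" and n s
  define P where "P f t = f t - ((f (x 0) - y 0) + (t - x 0) * ((f (x N) - y N) - (f (x 0) - y 0)) / (x N - x 0))"
    for f :: "real \<Rightarrow> real" and t
  define Tb where "Tb g s = (if \<exists>n\<in>{1..N}. s \<in> {x (n - 1) .. x n}
      then H g (SOME n. n\<in>{1..N} \<and> s \<in> {x (n - 1) .. x n}) s else 0)" for g s
  define Tbar where "Tbar f = Tb (P f)" for f
  have P0: "P f (x 0) = y 0" for f unfolding P_def by simp
  have PN: "P f (x N) = y N" for f unfolding P_def using x0N by simp
  have overlap: "H g n s = H g m s" if g0: "g (x 0) = y 0" and gN: "g (x N) = y N"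
     and n: "n \<in> {1..N}" and m: "m \<in> {1..N}" and sn: "s \<in> {x (n - 1) .. x n}"
     and sm: "s \<in> {x (m - 1) .. x m}" for g n m s
  proof -
    have main: "H g n s = H g m s" if nm: "n < m" and n: "n \<in> {1..N}" and m: "m \<in> {1..N}"
      and sn: "s \<in> {x (n - 1) .. x n}" and sm: "s \<in> {x (m - 1) .. x m}" for n m
    proof -
      have "m - 1 = n"
      proof (rule ccontr)
        assume "m - 1 \<noteq> n"
        then have "n < m - 1" using nm by simp
        then have "x n < x (m - 1)" using mono m by auto
        then show False using sn sm by auto
      qed
      then have s: "s = x n" using sn sm by auto
      have "H g n s = y n" unfolding H_def s using Linv_hi[OF n] joinN[OF n] gN by simp
      moreover have "H g m s = y n"
        unfolding H_def s using Linv_lo[OF m] join0[OF m] g0 \<open>m - 1 = n\<close> by simp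
      ultimately show ?thesis by simp
    qed
    show ?thesis
    proof (cases n m rule: linorder_cases)
      case less then show ?thesis using main[OF less n m sn sm] by simp
    next
      case equal then show ?thesis by simp
    next
      case greater then show ?thesis using main[OF greater m n sm sn] by simp
    qed
  qed
  have Tb_eq: "Tb g s = H g n s" if g0: "g (x 0) = y 0" and gN: "g (x N) = y N"
     and n: "n \<in> {1..N}" and sn: "s \<in> {x (n - 1) .. x n}" for g n s
  proof -
    have ex: "\<exists>n\<in>{1..N}. s \<in> {x (n - 1) .. x n}" using n sn by blast
    let ?m = "SOME n. n\<in>{1..N} \<and> s \<in> {x (n - 1) .. x n}"
    have m: "?m \<in> {1..N} \<and> s \<in> {x (?m - 1) .. x ?m}" using someI_ex[of "\<lambda>n. n\<in>{1..N} \<and> s \<in> {x (n - 1) .. x n}"] ex by blast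
    have "Tb g s = H g ?m s" unfolding Tb_def using ex by simp
    also have "\<dots> = H g n s" using overlap[OF g0 gN _ n _ sn] m by blast
    finally show ?thesis .
  qed
  have P_cont: "continuous_on I (P f)" if "continuous_on I f" for f
    unfolding P_def using x0N by (intro continuous_intros that) auto
  have P_id: "P f = f" if "f \<in> JD x y N" for f
  proof -
    have "f (x 0) = y 0" "f (x N) = y N" using that unfolding JD_def by auto
    then show ?thesis unfolding P_def by (simp add: fun_eq_iff)
  qed
  have Icover: "\<exists>n\<in>{1..N}. s \<in> {x (n - 1) .. x n}" if "s \<in> I" for s
    using cover[of N x, OF incr, of N s] that N_pos unfolding I_def by auto
  have I_union: "I = (\<Union>n\<in>{1..N}. {x (n - 1) .. x n})"
  proof
    show "I \<subseteq> (\<Union>n\<in>{1..N}. {x (n - 1) .. x n})" using Icover by blast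
  next
    show "(\<Union>n\<in>{1..N}. {x (n - 1) .. x n}) \<subseteq> I"
    proof
      fix s assume "s \<in> (\<Union>n\<in>{1..N}. {x (n - 1) .. x n})"
      then obtain n where n: "n \<in> {1..N}" "s \<in> {x (n - 1) .. x n}" by blast
      then have "x (n - 1) \<in> I" "x n \<in> I" using xin by auto
      then show "s \<in> I" using n unfolding I_def by auto
    qed
  qed
  have H_cont: "continuous_on {x (n - 1) .. x n} (H g n)"
    if n: "n \<in> {1..N}" and g: "continuous_on I g" for g n
  proof -
    have L: "continuous_on {x (n - 1) .. x n} (Linv x N n)"
      using cont_Linv continuous_on_subset by blast
    have img: "Linv x N n ` {x (n - 1) .. x n} \<subseteq> I" using Linv_in n by blast
    have a: "continuous_on I (\<alpha> n)" "continuous_on I (q n)"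
      using cont_\<alpha>[OF n] cont_q[OF n] unfolding CI_def I_def' by auto
    have "continuous_on {x (n - 1) .. x n} (\<lambda>s. \<alpha> n (Linv x N n s))"
      by (rule continuous_on_compose2[OF a(1) L img])
    moreover have "continuous_on {x (n - 1) .. x n} (\<lambda>s. g (Linv x N n s))"
      by (rule continuous_on_compose2[OF g L img])
    moreover have "continuous_on {x (n - 1) .. x n} (\<lambda>s. q n (Linv x N n s))"
      by (rule continuous_on_compose2[OF a(2) L img])
    ultimately show ?thesis unfolding H_def by (intro continuous_intros)
  qed
  have Tbar_CI: "Tbar f \<in> CI I" if f: "continuous_on I f" for f
  proof -
    have "continuous_on (\<Union>n\<in>{1..N}. {x (n - 1) .. x n}) (Tbar f)"
    proof (rule continuous_on_closed_Union)
      fix n assume n: "n \<in> {1..N}"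
      show "continuous_on {x (n - 1) .. x n} (Tbar f)"
        unfolding Tbar_def
        by (rule continuous_on_eq[OF H_cont[OF n P_cont[OF f]]]) (simp add: Tb_eq[OF P0 PN n])
    qed auto
    then show ?thesis unfolding CI_def I_union by simp
  qed
  have Tbar_interp: "Tbar f (x m) = y m" if "m \<le> N" for f m
  proof (cases "m = 0")
    case True
    have n: "1 \<in> {1..N}" using N_pos by auto
    have "Tbar f (x m) = H (P f) 1 (x 0)" unfolding Tbar_def True
      using Tb_eq[OF P0 PN n, of "x 0"] piece_lt[OF n] by simp
    also have "\<dots> = y 0" unfolding H_def using Linv_lo[OF n] join0[OF n] P0 by simp
    finally show ?thesis using True by simp
  next
    case False
    then have n: "m \<in> {1..N}" using that by auto
    have "Tbar f (x m) = H (P f) m (x m)" unfolding Tbar_def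
      using Tb_eq[OF P0 PN n, of "x m"] piece_lt[OF n] by simp
    also have "\<dots> = y m" unfolding H_def using Linv_hi[OF n] joinN[OF n] PN by simp
    finally show ?thesis .
  qed
  have \<alpha>_bound: "\<bar>\<alpha> n t\<bar> \<le> 1" if n: "n \<in> {1..N}" and t: "t \<in> I" for n t
  proof -
    have "\<bar>\<alpha> n t\<bar> \<le> supnorm I (\<alpha> n)"
      using cont_\<alpha>[OF n] t unfolding CI_def I_def' unfolding I_def by (intro supnorm_upper) auto
    also have "\<dots> \<le> Max ((\<lambda>n. supnorm (intI x N) (\<alpha> n)) ` {1..N})"
      unfolding I_def' using n by (intro Max_ge) auto
    finally show ?thesis using Lambda by simp
  qed
  have lip: "supdist I (Tbar f) (Tbar g) \<le> 4 * supdist I f g"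
    if f: "continuous_on I f" and g: "continuous_on I g" for f g
  proof -
    let ?D = "supdist I f g"
    have Dle: "\<bar>f t - g t\<bar> \<le> ?D" if "t \<in> I" for t
      unfolding supdist_def I_def using that f g unfolding I_def
      by (intro supnorm_upper continuous_intros) auto
    have Pdiff: "\<bar>P f t - P g t\<bar> \<le> 4 * ?D" if t: "t \<in> I" for t
    proof -
      have r: "0 \<le> (t - x 0) / (x N - x 0)" "(t - x 0) / (x N - x 0) \<le> 1"
        using t x0N unfolding I_def by auto
      have d0: "\<bar>f (x 0) - g (x 0)\<bar> \<le> ?D" and dN: "\<bar>f (x N) - g (x N)\<bar> \<le> ?D"
        and dt: "\<bar>f t - g t\<bar> \<le> ?D"
        using Dle xin t by auto
      have eq: "P f t - P g t = (f t - g t) - (f (x 0) - g (x 0))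
          - ((t - x 0) / (x N - x 0)) * ((f (x N) - g (x N)) - (f (x 0) - g (x 0)))"
      proof -
        have r_eq: "\<And>A. (t - x 0) * A / (x N - x 0) = ((t - x 0) / (x N - x 0)) * A"
          by simp
        define r where "r = (t - x 0) / (x N - x 0)"
        have Pf: "P h t = h t - ((h (x 0) - y 0) + r * ((h (x N) - y N) - (h (x 0) - y 0)))" for h
          unfolding P_def r_eq r_def ..
        show ?thesis unfolding Pf r_def[symmetric] by (simp add: algebra_simps)
      qed
      have "\<bar>((t - x 0) / (x N - x 0)) * ((f (x N) - g (x N)) - (f (x 0) - g (x 0)))\<bar>
          \<le> 1 * (2 * ?D)"
      proof -
        have a1: "\<bar>(t - x 0) / (x N - x 0)\<bar> \<le> 1" using r by linarith
        have a2: "\<bar>(f (x N) - g (x N)) - (f (x 0) - g (x 0))\<bar> \<le> 2 * ?D" using d0 dN by linarith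
        show ?thesis unfolding abs_mult by (rule mult_mono[OF a1 a2]) auto
      qed
      moreover have "\<And>a b c D :: real. \<bar>a\<bar> \<le> D \<Longrightarrow> \<bar>b\<bar> \<le> D \<Longrightarrow> \<bar>c\<bar> \<le> 1 * (2 * D) \<Longrightarrow> \<bar>a - b - c\<bar> \<le> 4 * D"
        by arith
      ultimately show ?thesis unfolding eq using d0 dt by blast
    qed
    show ?thesis unfolding supdist_def
    proof (rule supnorm_least)
      show "I \<noteq> {}" unfolding I_def using x0N by auto
    next
      fix s assume s: "s \<in> I"
      then obtain n where n: "n \<in> {1..N}" and sn: "s \<in> {x (n - 1) .. x n}" using Icover by blast
      let ?t = "Linv x N n s"
      have t: "?t \<in> I" using Linv_in n sn by blast
      have "Tbar f s - Tbar g s = \<alpha> n ?t * (P f ?t - P g ?t)"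
        unfolding Tbar_def Tb_eq[OF P0 PN n sn] H_def by (simp add: algebra_simps)
      then have "\<bar>Tbar f s - Tbar g s\<bar> = \<bar>\<alpha> n ?t\<bar> * \<bar>P f ?t - P g ?t\<bar>" by (simp add: abs_mult)
      also have "\<dots> \<le> 1 * (4 * ?D)"
        using \<alpha>_bound[OF n t] Pdiff[OF t] by (intro mult_mono) auto
      finally show "\<bar>Tbar f s - Tbar g s\<bar> \<le> 4 * supnorm I (\<lambda>t. f t - g t)" by (simp add: supdist_def)
    qed
  qed
  show ?thesis
  proof (intro exI conjI ballI)
    fix f assume f: "f \<in> CI (intI x N)"
    then have "continuous_on I f" unfolding CI_def I_def' by simp
    then show "Tbar f \<in> JD x y N"
      using Tbar_CI Tbar_interp unfolding JD_def I_def' by auto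
  next
    show "op_continuous (intI x N) Tbar"
      unfolding op_continuous_def I_def'
    proof (intro ballI allI impI)
      fix f e assume f: "f \<in> CI I" and e: "(0::real) < e"
      show "\<exists>d>0. \<forall>g\<in>CI I. supdist I f g < d \<longrightarrow> supdist I (Tbar f) (Tbar g) < e"
      proof (intro exI[of _ "e / 4"] conjI ballI impI)
        show "0 < e / 4" using e by simp
      next
        fix g assume g: "g \<in> CI I" and d: "supdist I f g < e / 4"
        have "supdist I (Tbar f) (Tbar g) \<le> 4 * supdist I f g"
          using f g lip unfolding CI_def by auto
        then show "supdist I (Tbar f) (Tbar g) < e" using d by linarith
      qed
    qed
  next
    fix f n s assume f: "f \<in> JD x y N" and n: "n \<in> {1..N}" and s: "s \<in> {x (n - 1) .. x n}"
    have "f (x 0) = y 0" "f (x N) = y N" using f unfolding JD_def by auto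
    then show "Tbar f s = \<alpha> n (Linv x N n s) * f (Linv x N n s) + q n (Linv x N n s)"
      unfolding Tbar_def P_id[OF f] using Tb_eq[OF _ _ n s] unfolding H_def by simp
  qed
qed

end
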